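(* For any $\eta>0$ and $\beta>0$, the expected regret of Skipper$(\beta,\mathrm{DEW}(\eta,\beta))$ (Skipper with threshold $\beta$ wrapping DEW run with learning rate $\eta$ and delay bound $d_{\max}=\beta$) against an oblivious adversary satisfies $$\bar{\mathcal R}_T\le |S_\beta|+\max\left\{\frac{\ln K}{\eta},\,4e\beta\ln K\right\}+\eta\left(\frac{KTe}{2}+D_\beta\right).$$
   Context: Setting: fix integers $K\ge 2$, $T\ge 1$, and write $[K]=\{1,\dots,K\}$. An oblivious adversary fixes in advance losses $\ell_t^a\in[0,1]$ for $t=1,2,\dots$, $a\in[K]$, and nonnegative integer delays $d_1,d_2,\dots$. In each round $t$ the learner picks (possibly at random) an action $A_t\in[K]$ and suffers loss $\ell_t^{A_t}$; at the end of round $t$ (after $A_t$ has been chosen) it observes the pairs $(s,\ell_s^{A_s})$ for all $s\le t$ with $s+d_s=t$. The expected regret is $\bar{\mathcal R}_T=\mathbb E\big[\sum_{t=1}^T\ell_t^{A_t}\big]-\min_{a\in[K]}\sum_{t=1}^T\ell_t^a$, the expectation being over the learner's randomization. Algorithm DEW (delayed exponential weights) with inputs $\eta>0$ and $d_{\max}$: set $\eta'=\min\{\eta,(4e\,d_{\max})^{-1}\}$ and $w_0^a=1$ for all $a$. For $t=1,2,\dots$: let $p_t^a=w_{t-1}^a/\sum_b w_{t-1}^b$; draw $A_t\sim p_t$ and play it; at the end of round $t$, for every received pair $(s,\ell_s^{A_s})$ form the estimates $\hat\ell_s^a=\ell_s^a\mathbb 1(a=A_s)/p_s^a$ for all $a$;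 update $w_t^a=w_{t-1}^a\exp\big(-\eta'\sum_{s}\hat\ell_s^a\big)$, the sum over pairs received at the end of round $t$. Skipper$(\beta,\mathcal A)$ with threshold $\beta>0$ and base algorithm $\mathcal A$: in every round $t$ it plays the action $A_t$ proposed by $\mathcal A$, and at the end of round $t$ it passes to $\mathcal A$ exactly those observed pairs $(s,\ell_s^{A_s})$ with $s+d_s=t$ and $d_s<\beta$. $S_\beta=\{t\in[T]: d_t\ge\beta\}$ and $D_\beta=\sum_{t\in[T]\setminus S_\beta}d_t$. *)

theory Defs
  imports "HOL-Probability.Probability"
begin

(* Conventions:
   actions are the natural numbers 1..K;
   l t a  = loss of action a in round t (t = 1,2,...);
   d t    = delay of round t;
   a history h is the list [A_1, ..., A_n] of actions played so far, so A_s = h ! (s - 1). *)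

definition dew_eta' :: "real \<Rightarrow> real \<Rightarrow> real" where
  "dew_eta' eta dmax = min eta (1 / (4 * exp 1 * dmax))"

text \<open>Probability vectors p_1, ..., p_n used by Skipper(beta, DEW(eta, beta)) given the
  first n actions of history h.  The base DEW has, by the end of round n, received exactly the
  pairs (s, l s (A_s)) with s + d s <= n and d s < beta; its weight of action a is
  exp(- eta' * sum of the importance-weighted estimates received so far).\<close>
primrec skipper_dew_probs ::
  "nat \<Rightarrow> real \<Rightarrow> real \<Rightarrow> (nat \<Rightarrow> nat \<Rightarrow> real) \<Rightarrow> (nat \<Rightarrow> nat) \<Rightarrow> nat \<Rightarrow> nat list
    \<Rightarrow> (nat \<Rightarrow> real) list" where
  "skipper_dew_probs K eta beta l d 0 h = []"
| "skipper_dew_probs K eta beta l d (Suc n) h =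
     (let ps = skipper_dew_probs K eta beta l d n h;
          w = (\<lambda>a. exp (- dew_eta' eta beta *
                (\<Sum>s\<in>{s\<in>{1..n}. s + d s \<le> n \<and> real (d s) < beta}.
                   (if a = h ! (s - 1) then l s a / (ps ! (s - 1)) a else 0))))
      in ps @ [\<lambda>a. w a / (\<Sum>b\<in>{1..K}. w b)])"

definition skipper_dew_action ::
  "nat \<Rightarrow> real \<Rightarrow> real \<Rightarrow> (nat \<Rightarrow> nat \<Rightarrow> real) \<Rightarrow> (nat \<Rightarrow> nat) \<Rightarrow> nat list \<Rightarrow> nat pmf" where
  "skipper_dew_action K eta beta l d h =
     embed_pmf (\<lambda>a. if a \<in> {1..K}
                     then (skipper_dew_probs K eta beta l d (Suc (length h)) h ! length h) a
                     else 0)"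

primrec skipper_dew_traj ::
  "nat \<Rightarrow> real \<Rightarrow> real \<Rightarrow> (nat \<Rightarrow> nat \<Rightarrow> real) \<Rightarrow> (nat \<Rightarrow> nat) \<Rightarrow> nat \<Rightarrow> nat list pmf" where
  "skipper_dew_traj K eta beta l d 0 = return_pmf []"
| "skipper_dew_traj K eta beta l d (Suc n) =
     bind_pmf (skipper_dew_traj K eta beta l d n)
       (\<lambda>h. map_pmf (\<lambda>a. h @ [a]) (skipper_dew_action K eta beta l d h))"

definition skipper_dew_regret ::
  "nat \<Rightarrow> real \<Rightarrow> real \<Rightarrow> (nat \<Rightarrow> nat \<Rightarrow> real) \<Rightarrow> (nat \<Rightarrow> nat) \<Rightarrow> nat \<Rightarrow> real" where
  "skipper_dew_regret K eta beta l d T =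
     measure_pmf.expectation (skipper_dew_traj K eta beta l d T)
        (\<lambda>h. \<Sum>t\<in>{1..T}. l t (h ! (t - 1)))
     - (MIN a\<in>{1..K}. \<Sum>t\<in>{1..T}. l t a)"

definition S_beta :: "real \<Rightarrow> (nat \<Rightarrow> nat) \<Rightarrow> nat \<Rightarrow> nat set" where
  "S_beta beta d T = {t\<in>{1..T}. real (d t) \<ge> beta}"

definition D_beta :: "real \<Rightarrow> (nat \<Rightarrow> nat) \<Rightarrow> nat \<Rightarrow> nat" where
  "D_beta beta d T = (\<Sum>t\<in>{1..T} - S_beta beta d T. d t)"

end

theory Submission
  imports Defs
begin

lemma exp_quad: fixes y :: real assumes "y \<ge> 0" shows "exp (- y) \<le> 1 - y + y\<^sup>2 / 2"
proof -
  let ?f = "\<lambda>y::real. 1 - y + y\<^sup>2 / 2 - exp (- y)"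
  have d: "(?f has_real_derivative (-1 + y + exp (- y))) (at y)" for y
    by (auto intro!: derivative_eq_intros simp: power2_eq_square)
  have "?f 0 \<le> ?f y"
  proof (rule DERIV_nonneg_imp_nondecreasing[OF assms])
    fix x assume "0 \<le> x" "x \<le> y"
    show "\<exists>y. (?f has_real_derivative y) (at x) \<and> 0 \<le> y"
      using d[of x] exp_ge_add_one_self[of "-x"] by (intro exI[of _ "-1 + x + exp (- x)"]) auto
  qed
  then show ?thesis by simp
qed

lemma inv_bound: fixes x :: real assumes "0 \<le> x" "x \<le> 1/2" shows "1 / (1 - x) \<le> exp (2 * x)"
proof -
  have "1 + x / (1 - x) \<le> exp (x / (1 - x))" by (rule exp_ge_add_one_self)
  moreover have "1 + x / (1 - x) = 1 / (1 - x)" using assms by (simp add: field_simps)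
  moreover have "x / (1 - x) \<le> 2 * x"
  proof -
    have "x * (2 * x) \<le> x * 1" by (rule mult_left_mono) (use assms in auto)
    then show ?thesis using assms by (simp add: field_simps)
  qed
  ultimately show ?thesis by (smt (verit) exp_mono)
qed

lemma ew_bound:
  fixes x :: "nat \<Rightarrow> nat \<Rightarrow> real" and et :: real and K T :: nat
  assumes et: "et > 0" and K: "K \<ge> 1" and xnn: "\<And>t a. a \<in> {1..K} \<Longrightarrow> x t a \<ge> 0"
    and astar: "astar \<in> {1..K}"
    and Xc_def: "\<And>n a. Xc n a = (\<Sum>t\<in>{1..n}. x t a)"
    and qq_def: "\<And>n a. qq n a = exp (- et * Xc n a) / (\<Sum>b\<in>{1..K}. exp (- et * Xc n b))"
  shows "(\<Sum>t\<in>{1..T}. \<Sum>a\<in>{1..K}. qq (t - 1) a * x t a)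
     \<le> ln (real K) / et + Xc T astar + et / 2 * (\<Sum>t\<in>{1..T}. \<Sum>a\<in>{1..K}. qq (t - 1) a * (x t a)\<^sup>2)"
proof -
  define W where "W n = (\<Sum>a\<in>{1..K}. exp (- et * Xc n a))" for n
  have Wpos: "W n > 0" for n unfolding W_def using K by (intro sum_pos) auto
  have step: "ln (W (Suc n)) \<le> ln (W n) - et * (\<Sum>a\<in>{1..K}. qq n a * x (Suc n) a)
       + et\<^sup>2 / 2 * (\<Sum>a\<in>{1..K}. qq n a * (x (Suc n) a)\<^sup>2)" for n
  proof -
    have qqn: "qq n a = exp (- et * Xc n a) / W n" for a unfolding qq_def W_def by simp
    have "W (Suc n) = W n * (\<Sum>a\<in>{1..K}. qq n a * exp (- et * x (Suc n) a))"
      unfolding W_def Xc_def qqn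
      using Wpos[of n] by (simp add: sum_distrib_left distrib_left exp_add[symmetric] W_def Xc_def)
    also have "\<dots> \<le> W n * (\<Sum>a\<in>{1..K}. qq n a * (1 - et * x (Suc n) a + (et * x (Suc n) a)\<^sup>2 / 2))"
    proof (rule mult_left_mono, rule sum_mono)
      fix a assume a: "a \<in> {1..K}"
      have "exp (- (et * x (Suc n) a)) \<le> 1 - et * x (Suc n) a + (et * x (Suc n) a)\<^sup>2 / 2"
        using xnn[OF a] et by (intro exp_quad) simp
      then show "qq n a * exp (- et * x (Suc n) a) \<le> qq n a * (1 - et * x (Suc n) a + (et * x (Suc n) a)\<^sup>2 / 2)"
        unfolding qqn using Wpos[of n] by (intro mult_left_mono) auto
    qed (use less_imp_le[OF Wpos[of n]] in simp)
    also have "(\<Sum>a\<in>{1..K}. qq n a * (1 - et * x (Suc n) a + (et * x (Suc n) a)\<^sup>2 / 2))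
      = (\<Sum>a\<in>{1..K}. qq n a) - et * (\<Sum>a\<in>{1..K}. qq n a * x (Suc n) a)
         + et\<^sup>2 / 2 * (\<Sum>a\<in>{1..K}. qq n a * (x (Suc n) a)\<^sup>2)"
      by (simp add: sum.distrib sum_subtractf sum_distrib_left algebra_simps power_mult_distrib)
    also have "(\<Sum>a\<in>{1..K}. qq n a) = 1"
      unfolding qqn using Wpos[of n] by (simp add: sum_divide_distrib[symmetric] W_def)
    finally have le: "W (Suc n) \<le> W n * (1 - et * (\<Sum>a\<in>{1..K}. qq n a * x (Suc n) a)
         + et\<^sup>2 / 2 * (\<Sum>a\<in>{1..K}. qq n a * (x (Suc n) a)\<^sup>2))" (is "_ \<le> W n * ?y") .
    have "0 < W n * ?y" using le Wpos[of "Suc n"] by linarith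
    then have ypos: "?y > 0" using Wpos[of n] zero_less_mult_pos by blast
    have "ln (W (Suc n)) \<le> ln (W n * ?y)" using le Wpos ypos by simp
    also have "\<dots> = ln (W n) + ln ?y" using Wpos[of n] ypos by (simp add: ln_mult)
    also have "ln ?y \<le> ?y - 1" using ypos by (rule ln_le_minus_one)
    finally show ?thesis by simp
  qed
  have main: "ln (W n) \<le> ln (real K) - et * (\<Sum>t\<in>{1..n}. \<Sum>a\<in>{1..K}. qq (t - 1) a * x t a)
       + et\<^sup>2 / 2 * (\<Sum>t\<in>{1..n}. \<Sum>a\<in>{1..K}. qq (t - 1) a * (x t a)\<^sup>2)" for n
  proof (induction n)
    case 0 then show ?case unfolding W_def Xc_def by simp
  next
    case (Suc n)
    have s1: "(\<Sum>t\<in>{1..Suc n}. \<Sum>a\<in>{1..K}. qq (t - 1) a * x t a)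
      = (\<Sum>t\<in>{1..n}. \<Sum>a\<in>{1..K}. qq (t - 1) a * x t a) + (\<Sum>a\<in>{1..K}. qq n a * x (Suc n) a)"
      by simp
    have s2: "(\<Sum>t\<in>{1..Suc n}. \<Sum>a\<in>{1..K}. qq (t - 1) a * (x t a)\<^sup>2)
      = (\<Sum>t\<in>{1..n}. \<Sum>a\<in>{1..K}. qq (t - 1) a * (x t a)\<^sup>2) + (\<Sum>a\<in>{1..K}. qq n a * (x (Suc n) a)\<^sup>2)"
      by simp
    show ?case unfolding s1 s2 using step[of n] Suc.IH by (simp only: distrib_left)
  qed
  have "exp (- et * Xc T astar) \<le> W T" unfolding W_def
    using astar by (intro member_le_sum) auto
  then have "- et * Xc T astar \<le> ln (W T)" using Wpos[of T] by (simp add: ln_ge_iff)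
  then have "- et * Xc T astar \<le> ln (real K) - et * (\<Sum>t\<in>{1..T}. \<Sum>a\<in>{1..K}. qq (t - 1) a * x t a)
       + et\<^sup>2 / 2 * (\<Sum>t\<in>{1..T}. \<Sum>a\<in>{1..K}. qq (t - 1) a * (x t a)\<^sup>2)" using main[of T] by simp
  then have "et * (\<Sum>t\<in>{1..T}. \<Sum>a\<in>{1..K}. qq (t - 1) a * x t a) \<le>
     et * (ln (real K) / et + Xc T astar + et / 2 * (\<Sum>t\<in>{1..T}. \<Sum>a\<in>{1..K}. qq (t - 1) a * (x t a)\<^sup>2))"
    using et by (simp add: algebra_simps power2_eq_square)
  then show ?thesis using et by simp
qed


lemma sum_if_eq: "finite A \<Longrightarrow> b \<in> A \<Longrightarrow> (\<Sum>a\<in>A. f a * (if a = b then g a else 0)) = f b * (g b :: real)"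
proof -
  assume "finite A" "b \<in> A"
  have "(\<Sum>a\<in>A. f a * (if a = b then g a else 0)) = (\<Sum>a\<in>A. if a = b then f a * g a else 0)"
    by (rule sum.cong) auto
  then show ?thesis using \<open>finite A\<close> \<open>b \<in> A\<close> by (simp add: sum.delta)
qed

locale dew =
  fixes K :: nat and eta beta :: real and l :: "nat \<Rightarrow> nat \<Rightarrow> real" and d :: "nat \<Rightarrow> nat"
  assumes K2: "K \<ge> 2" and eta_pos: "eta > 0" and beta_pos: "beta > 0"
    and loss: "\<And>t a. a \<in> {1..K} \<Longrightarrow> 0 \<le> l t a \<and> l t a \<le> 1"
begin

abbreviation "probs \<equiv> skipper_dew_probs K eta beta l d"
definition P :: "nat \<Rightarrow> nat list \<Rightarrow> nat \<Rightarrow> real" where "P v h = probs v h ! (v - 1)"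
definition et :: real where "et = dew_eta' eta beta"
definition est :: "nat \<Rightarrow> nat list \<Rightarrow> nat \<Rightarrow> real" where
  "est s h a = (if a = h ! (s - 1) then l s a / P s h a else 0)"
definition Ob :: "nat \<Rightarrow> nat set" where "Ob n = {s\<in>{1..n}. s + d s \<le> n \<and> real (d s) < beta}"
definition Lobs :: "nat \<Rightarrow> nat list \<Rightarrow> nat \<Rightarrow> real" where "Lobs n h a = (\<Sum>s\<in>Ob n. est s h a)"

lemma length_probs[simp]: "length (probs n h) = n"
  by (induction n) (auto simp: Let_def)

lemma probs_prefix: "m \<le> n \<Longrightarrow> i < m \<Longrightarrow> probs n h ! i = probs m h ! i"
proof (induction n)
  case 0 then show ?case by simp
next
  case (Suc n)
  show ?case
  proof (cases "m = Suc n")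
    case True then show ?thesis by simp
  next
    case False
    then have "m \<le> n" using Suc by simp
    have "probs (Suc n) h ! i = probs n h ! i"
      using Suc.prems \<open>m \<le> n\<close> by (simp add: Let_def nth_append)
    then show ?thesis using Suc.IH[OF \<open>m \<le> n\<close> Suc.prems(2)] by simp
  qed
qed

lemma P_Suc: "P (Suc n) h a = exp (- et * Lobs n h a) / (\<Sum>b\<in>{1..K}. exp (- et * Lobs n h b))"
proof -
  have e: "\<And>s a. s \<in> Ob n \<Longrightarrow> (if a = h ! (s - 1) then l s a / (probs n h ! (s - 1)) a else 0) = est s h a"
  proof -
    fix s a assume "s \<in> Ob n"
    then have "1 \<le> s" "s \<le> n" unfolding Ob_def by auto
    then have "probs n h ! (s - 1) = probs s h ! (s - 1)" using probs_prefix[of s n "s - 1" h] by auto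
    then show "(if a = h ! (s - 1) then l s a / (probs n h ! (s - 1)) a else 0) = est s h a"
      unfolding est_def P_def by simp
  qed
  have L: "\<And>a. (\<Sum>s\<in>{s\<in>{1..n}. s + d s \<le> n \<and> real (d s) < beta}.
      if a = h ! (s - 1) then l s a / (probs n h ! (s - 1)) a else 0) = Lobs n h a"
    unfolding Lobs_def by (rule sum.cong) (use e in \<open>auto simp: Ob_def\<close>)
  have 1: "P (Suc n) h = (\<lambda>a. exp (- et * (\<Sum>s\<in>{s\<in>{1..n}. s + d s \<le> n \<and> real (d s) < beta}.
      if a = h ! (s - 1) then l s a / (probs n h ! (s - 1)) a else 0)) /
      (\<Sum>b\<in>{1..K}. exp (- et * (\<Sum>s\<in>{s\<in>{1..n}. s + d s \<le> n \<and> real (d s) < beta}.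
      if b = h ! (s - 1) then l s b / (probs n h ! (s - 1)) b else 0))))"
    unfolding P_def et_def by (simp add: Let_def nth_append)
  show ?thesis unfolding 1 L by simp
qed

lemma K1: "K \<ge> 1" using K2 by simp

lemma sum_exp_pos: "(\<Sum>b\<in>{1..K}. exp (f b :: real)) > 0"
  using K1 by (intro sum_pos) auto

lemma P_pos: "P (Suc n) h a > 0"
  unfolding P_Suc using sum_exp_pos by simp

lemma P_sum: "(\<Sum>a\<in>{1..K}. P (Suc n) h a) = 1"
  unfolding P_Suc using sum_exp_pos[of "\<lambda>b. - et * Lobs n h b"]
  by (simp add: sum_divide_distrib[symmetric])

lemma P_sum_simp[simp]: "sum (P (Suc n) h) {Suc 0..K} = 1"
  using P_sum[of n h] by simp

lemma P_pos': "v \<ge> 1 \<Longrightarrow> P v h a > 0"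
  using P_pos[of "v - 1"] by simp

lemma P_sum': "v \<ge> 1 \<Longrightarrow> (\<Sum>a\<in>{1..K}. P v h a) = 1"
  using P_sum[of "v - 1"] by simp

lemma P_le1: "a \<in> {1..K} \<Longrightarrow> P (Suc n) h a \<le> 1"
proof -
  assume a: "a \<in> {1..K}"
  have "P (Suc n) h a \<le> (\<Sum>b\<in>{1..K}. P (Suc n) h b)"
    using a by (intro member_le_sum) (auto intro: less_imp_le P_pos)
  then show ?thesis using P_sum by simp
qed

lemma P_dep: "(\<And>u. u \<in> {1..n} \<Longrightarrow> u + d u \<le> n \<Longrightarrow> h ! (u - 1) = h' ! (u - 1))
   \<Longrightarrow> P (Suc n) h = P (Suc n) h'"
proof (induction n arbitrary: rule: less_induct)
  case (less n)
  have "est s h a = est s h' a" if s: "s \<in> Ob n" for s a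
  proof -
    from s have s1: "1 \<le> s" "s \<le> n" "s + d s \<le> n" unfolding Ob_def by auto
    have ag: "h ! (u - 1) = h' ! (u - 1)" if "u \<in> {1..s - 1}" "u + d u \<le> s - 1" for u
      using that s1 by (intro less.prems) auto
    have "P (Suc (s - 1)) h = P (Suc (s - 1)) h'"
      using s1 ag by (intro less.IH) auto
    moreover have "h ! (s - 1) = h' ! (s - 1)" using s1 by (intro less.prems) auto
    ultimately show ?thesis unfolding est_def using s1 by simp
  qed
  then have "Lobs n h = Lobs n h'" unfolding Lobs_def by (auto intro!: sum.cong)
  then show ?case unfolding P_Suc by (intro ext) simp
qed

lemma P_append: "length h \<ge> n \<Longrightarrow> P (Suc n) (h @ xs) = P (Suc n) h"
  by (intro P_dep) (auto simp: nth_append)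

lemma P_take: "m \<ge> n \<Longrightarrow> P (Suc n) (take m h) = P (Suc n) h"
  by (intro P_dep) auto

lemma P_upd: "1 \<le> s \<Longrightarrow> n < s + d s \<Longrightarrow> P (Suc n) (h[s - 1 := b]) = P (Suc n) h"
proof (intro P_dep)
  fix u assume "1 \<le> s" "n < s + d s" "u \<in> {1..n}" "u + d u \<le> n"
  then have "u \<noteq> s" by auto
  then have "u - 1 \<noteq> s - 1" using \<open>1 \<le> s\<close> \<open>u \<in> {1..n}\<close> by auto
  then show "h[s - 1 := b] ! (u - 1) = h ! (u - 1)" by simp
qed

abbreviation "traj \<equiv> skipper_dew_traj K eta beta l d"
abbreviation "act \<equiv> skipper_dew_action K eta beta l d"
definition H :: "nat \<Rightarrow> nat list set" where "H n = {h. length h = n \<and> set h \<subseteq> {1..K}}"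
definition E :: "nat \<Rightarrow> (nat list \<Rightarrow> real) \<Rightarrow> real" where
  "E n g = (\<Sum>h\<in>H n. pmf (traj n) h * g h)"

lemma finite_H[simp]: "finite (H n)"
proof -
  have "H n = {xs. set xs \<subseteq> {1..K} \<and> length xs = n}" unfolding H_def by auto
  then show ?thesis using finite_lists_length_eq[of "{1..K}" n] by simp
qed

lemma pmf_act: "pmf (act h) a = (if a \<in> {1..K} then P (Suc (length h)) h a else 0)"
proof -
  let ?f = "\<lambda>a. if a \<in> {1..K} then P (Suc (length h)) h a else 0"
  have nn: "\<And>a. 0 \<le> ?f a" by (simp add: less_imp_le[OF P_pos])
  have "(\<integral>\<^sup>+x. ennreal (?f x) \<partial>count_space UNIV) = (\<Sum>a\<in>{1..K}. ennreal (?f a))"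
    by (rule nn_integral_count_space') auto
  also have "\<dots> = ennreal (\<Sum>a\<in>{1..K}. ?f a)"
    by (intro sum_ennreal) (auto simp: less_imp_le[OF P_pos])
  also have "(\<Sum>a\<in>{1..K}. ?f a) = 1" using P_sum by simp
  finally have i: "(\<integral>\<^sup>+x. ennreal (?f x) \<partial>count_space UNIV) = 1" by simp
  have "act h = embed_pmf ?f"
    by (simp only: skipper_dew_action_def P_def diff_Suc_1)
  then show ?thesis using pmf_embed_pmf[of ?f, OF _ i] nn by simp
qed

lemma set_act: "set_pmf (act h) \<subseteq> {1..K}"
  using pmf_act[of h] by (auto simp: set_pmf_eq split: if_splits)

lemma set_traj: "set_pmf (traj n) \<subseteq> H n"
proof (induction n)
  case 0 then show ?case by (simp add: H_def)
next
  case (Suc n)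
  then show ?case using set_act by (auto simp: H_def subset_iff)
qed

lemma exp_traj: "measure_pmf.expectation (traj n) g = E n g"
  unfolding E_def using set_traj[of n]
  by (subst integral_measure_pmf[of "H n"]) auto

lemma E_Suc: "E (Suc n) g = E n (\<lambda>h. \<Sum>a\<in>{1..K}. P (Suc n) h a * g (h @ [a]))"
proof -
  have "E (Suc n) g = measure_pmf.expectation (traj (Suc n)) g" by (rule exp_traj[symmetric])
  also have "\<dots> = (\<Sum>h\<in>H n. pmf (traj n) h *\<^sub>R
      measure_pmf.expectation (map_pmf (\<lambda>a. h @ [a]) (act h)) g)"
    unfolding skipper_dew_traj.simps
  proof (rule pmf_expectation_bind)
    show "finite (set_pmf (map_pmf (\<lambda>a. h @ [a]) (act h)))" for h
      using set_act[of h] finite_subset by auto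
  qed (use set_traj in auto)
  also have "\<dots> = E n (\<lambda>h. \<Sum>a\<in>{1..K}. P (Suc n) h a * g (h @ [a]))"
    unfolding E_def
  proof (rule sum.cong)
    fix h assume h: "h \<in> H n"
    have "measure_pmf.expectation (map_pmf (\<lambda>a. h @ [a]) (act h)) g
        = measure_pmf.expectation (act h) (\<lambda>a. g (h @ [a]))" by simp
    also have "\<dots> = (\<Sum>a\<in>{1..K}. pmf (act h) a *\<^sub>R g (h @ [a]))"
      using set_act[of h] by (intro integral_measure_pmf) auto
    also have "\<dots> = (\<Sum>a\<in>{1..K}. P (Suc n) h a * g (h @ [a]))"
      using h by (auto simp: pmf_act H_def)
    finally show "pmf (traj n) h *\<^sub>R measure_pmf.expectation (map_pmf (\<lambda>a. h @ [a]) (act h)) g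
      = pmf (traj n) h * (\<Sum>a\<in>{1..K}. P (Suc n) h a * g (h @ [a]))" by simp
  qed simp
  finally show ?thesis .
qed

lemma E_0: "E 0 g = g []"
proof -
  have "H 0 = {[]}" unfolding H_def by auto
  then show ?thesis unfolding E_def by simp
qed

lemma E_cong: "(\<And>h. h \<in> H n \<Longrightarrow> f h = g h) \<Longrightarrow> E n f = E n g"
  unfolding E_def by (auto intro!: sum.cong)

lemma E_mono: "(\<And>h. h \<in> H n \<Longrightarrow> f h \<le> g h) \<Longrightarrow> E n f \<le> E n g"
  unfolding E_def by (auto intro!: sum_mono mult_left_mono)

lemma E_add: "E n (\<lambda>h. f h + g h) = E n f + E n g"
  unfolding E_def by (simp add: distrib_left sum.distrib)

lemma E_diff: "E n (\<lambda>h. f h - g h) = E n f - E n g"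
  unfolding E_def by (simp add: right_diff_distrib sum_subtractf)

lemma E_cmult: "E n (\<lambda>h. c * f h) = c * E n f"
  unfolding E_def by (simp add: sum_distrib_left mult.left_commute)

lemma E_sum: "E n (\<lambda>h. \<Sum>i\<in>I. f i h) = (\<Sum>i\<in>I. E n (f i))"
  unfolding E_def by (simp add: sum_distrib_left sum.swap[of _ "H n"])

lemma E_const: "E n (\<lambda>h. c) = c"
proof (induction n)
  case 0 then show ?case by (simp add: E_0)
next
  case (Suc n)
  have "E (Suc n) (\<lambda>h. c) = E n (\<lambda>h. (\<Sum>a\<in>{1..K}. P (Suc n) h a) * c)"
    by (simp add: E_Suc flip: sum_distrib_right)
  then show ?case using Suc by (simp add: P_sum)
qed

lemma E_take: "m \<le> n \<Longrightarrow> E n (\<lambda>h. g (take m h)) = E m g"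
proof (induction n)
  case 0 then show ?case by (simp add: E_0)
next
  case (Suc n)
  show ?case
  proof (cases "m = Suc n")
    case True
    show ?thesis unfolding True by (intro E_cong) (auto simp: H_def)
  next
    case False
    then have mn: "m \<le> n" using Suc by simp
    have "E (Suc n) (\<lambda>h. g (take m h)) = E n (\<lambda>h. \<Sum>a\<in>{1..K}. P (Suc n) h a * g (take m (h @ [a])))"
      by (rule E_Suc)
    also have "\<dots> = E n (\<lambda>h. (\<Sum>a\<in>{1..K}. P (Suc n) h a) * g (take m h))"
      using mn by (intro E_cong) (auto simp: H_def simp flip: sum_distrib_right)
    also have "\<dots> = E m g" using Suc.IH[OF mn] by (simp add: P_sum)
    finally show ?thesis .
  qed
qed

lemma E_indep:
  assumes s1: "1 \<le> s" and sn: "s \<le> n" and b: "b \<in> {1..K}"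
    and kern: "\<And>v h. s < v \<Longrightarrow> v \<le> n \<Longrightarrow> P v (h[s - 1 := b]) = P v h"
    and inv: "\<And>h. \<psi> (h[s - 1 := b]) = \<psi> h"
  shows "E n (\<lambda>h. \<psi> h * (if h ! (s - 1) = b then c / P s h b else 0)) = c * E n \<psi>"
  using sn kern inv
proof (induction n arbitrary: \<psi>)
  case 0 then show ?case using s1 by simp
next
  case (Suc n)
  let ?G = "\<lambda>h. if h ! (s - 1) = b then c / P s h b else 0"
  show ?case
  proof (cases "s = Suc n")
    case True
    have Ps: "P s (h @ [a]) = P (Suc n) h" if "h \<in> H n" for h a
      using that True P_append[of n h "[a]"] by (simp add: H_def)
    have Pb: "P (Suc n) h b > 0" for h by (rule P_pos)
    have "E (Suc n) (\<lambda>h. \<psi> h * ?G h) = E n (\<lambda>h. \<Sum>a\<in>{1..K}. P (Suc n) h a * (\<psi> (h @ [a]) * ?G (h @ [a])))"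
      by (rule E_Suc)
    also have "\<dots> = E n (\<lambda>h. c * \<psi> (h @ [b]))"
    proof (rule E_cong)
      fix h assume h: "h \<in> H n"
      have "(\<Sum>a\<in>{1..K}. P (Suc n) h a * (\<psi> (h @ [a]) * ?G (h @ [a])))
          = (\<Sum>a\<in>{1..K}. if a = b then c * \<psi> (h @ [b]) else 0)"
      proof (rule sum.cong)
        fix a assume "a \<in> {1..K}"
        have "(h @ [a]) ! (s - 1) = a" using h True by (simp add: H_def nth_append)
        then show "P (Suc n) h a * (\<psi> (h @ [a]) * ?G (h @ [a])) = (if a = b then c * \<psi> (h @ [b]) else 0)"
          using Ps[OF h, of a] Pb[of h] by auto
      qed simp
      also have "\<dots> = c * \<psi> (h @ [b])" using b by simp
      finally show "(\<Sum>a\<in>{1..K}. P (Suc n) h a * (\<psi> (h @ [a]) * ?G (h @ [a]))) = c * \<psi> (h @ [b])" .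
    qed
    also have "\<dots> = c * E n (\<lambda>h. \<psi> (h @ [b]))" by (rule E_cmult)
    also have "E n (\<lambda>h. \<psi> (h @ [b])) = E (Suc n) \<psi>"
    proof -
      have "E (Suc n) \<psi> = E n (\<lambda>h. \<Sum>a\<in>{1..K}. P (Suc n) h a * \<psi> (h @ [a]))" by (rule E_Suc)
      also have "\<dots> = E n (\<lambda>h. (\<Sum>a\<in>{1..K}. P (Suc n) h a) * \<psi> (h @ [b]))"
      proof (rule E_cong)
        fix h assume h: "h \<in> H n"
        have "\<psi> (h @ [a]) = \<psi> (h @ [b])" for a
        proof -
          have "(h @ [a])[s - 1 := b] = h @ [b]" using h True by (simp add: H_def list_update_append)
          then show ?thesis using Suc.prems(3)[of "h @ [a]"] by simp
        qed
        then show "(\<Sum>a\<in>{1..K}. P (Suc n) h a * \<psi> (h @ [a])) = (\<Sum>a\<in>{1..K}. P (Suc n) h a) * \<psi> (h @ [b])"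
          by (simp only: sum_distrib_right) (rule sum.cong; simp)
      qed
      also have "\<dots> = E n (\<lambda>h. \<psi> (h @ [b]))" by (simp add: P_sum)
      finally show ?thesis by simp
    qed
    finally show ?thesis .
  next
    case False
    then have sn: "s \<le> n" using Suc.prems by simp
    let ?\<psi>' = "\<lambda>h. \<Sum>a\<in>{1..K}. P (Suc n) h a * \<psi> (h @ [a])"
    have Gapp: "?G (h @ [a]) = ?G h" if "h \<in> H n" for h a
    proof -
      have "length h = n" using that by (simp add: H_def)
      then have "P s (h @ [a]) = P s h" using P_append[of "s - 1" h "[a]"] sn s1 by simp
      moreover have "s - 1 < length h" using \<open>length h = n\<close> sn s1 by simp
      then have "(h @ [a]) ! (s - 1) = h ! (s - 1)" by (simp add: nth_append)
      ultimately show ?thesis by simp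
    qed
    have "E (Suc n) (\<lambda>h. \<psi> h * ?G h) = E n (\<lambda>h. \<Sum>a\<in>{1..K}. P (Suc n) h a * (\<psi> (h @ [a]) * ?G (h @ [a])))"
      by (rule E_Suc)
    also have "\<dots> = E n (\<lambda>h. ?\<psi>' h * ?G h)"
    proof (rule E_cong)
      fix h assume h: "h \<in> H n"
      have ga: "\<And>a. ?G (h @ [a]) = ?G h" using Gapp[OF h] .
      show "(\<Sum>a\<in>{1..K}. P (Suc n) h a * (\<psi> (h @ [a]) * ?G (h @ [a]))) = ?\<psi>' h * ?G h"
        by (simp only: ga sum_distrib_right mult.assoc)
    qed
    also have "\<dots> = c * E n ?\<psi>'"
    proof (rule Suc.IH[OF sn])
      show "P v (h[s - 1 := b]) = P v h" if "s < v" "v \<le> n" for v h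
        using that Suc.prems(2) by simp
      show "?\<psi>' (h[s - 1 := b]) = ?\<psi>' h" for h
      proof (cases "s - 1 < length h")
        case True
        have "P (Suc n) (h[s - 1 := b]) = P (Suc n) h" using Suc.prems(2) False Suc.prems(1) by simp
        moreover have "\<psi> (h[s - 1 := b] @ [a]) = \<psi> (h @ [a])" for a
          using Suc.prems(3)[of "h @ [a]"] True by (simp add: list_update_append)
        ultimately show ?thesis by simp
      next
        case False
        then show ?thesis by (simp add: list_update_beyond)
      qed
    qed
    also have "E n ?\<psi>' = E (Suc n) \<psi>" by (rule E_Suc[symmetric])
    finally show ?thesis .
  qed
qed

lemma et_pos: "et > 0"
  unfolding et_def dew_eta'_def using eta_pos beta_pos by simp

lemma et_le: "et \<le> eta"
  unfolding et_def dew_eta'_def by simp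

lemma et_beta: "et * exp 1 * beta \<le> 1/4"
proof -
  have "et \<le> 1 / (4 * exp 1 * beta)" unfolding et_def dew_eta'_def by simp
  then have "et * (exp 1 * beta) \<le> 1 / (4 * exp 1 * beta) * (exp 1 * beta)"
    using beta_pos by (intro mult_right_mono) auto
  then show ?thesis using beta_pos by (simp add: field_simps)
qed

definition B0 :: nat where "B0 = nat \<lceil>beta\<rceil> - 1"

lemma B0_iff: "real k < beta \<longleftrightarrow> k \<le> B0"
proof -
  have "real k < beta \<longleftrightarrow> int k < \<lceil>beta\<rceil>" by (simp add: less_ceiling_iff)
  moreover have "\<lceil>beta\<rceil> \<ge> 1" using beta_pos by (simp add: one_le_ceiling)
  ultimately show ?thesis unfolding B0_def by linarith
qed

lemma B0_less: "real B0 < beta"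
  using B0_iff by simp

lemma est_nonneg: "a \<in> {1..K} \<Longrightarrow> 1 \<le> s \<Longrightarrow> est s h a \<ge> 0"
  unfolding est_def using loss[of a s] P_pos'[of s h a] by auto

lemma sum_est: assumes "1 \<le> s"
  shows "(\<Sum>b\<in>{1..K}. Q b * est s h b)
    = (if h ! (s - 1) \<in> {1..K} then Q (h ! (s - 1)) * l s (h ! (s - 1)) / P s h (h ! (s - 1)) else 0)"
proof -
  have "(\<Sum>b\<in>{1..K}. Q b * est s h b) = (\<Sum>b\<in>{1..K}. if b = h ! (s - 1) then Q (h ! (s - 1)) * l s (h ! (s - 1)) / P s h (h ! (s - 1)) else 0)"
    unfolding est_def by (rule sum.cong) auto
  then show ?thesis by (simp add: sum.delta')
qed

definition Arr :: "nat \<Rightarrow> nat set" where "Arr j = {s\<in>{1..j}. s + d s = j \<and> real (d s) < beta}"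
definition X :: "nat \<Rightarrow> nat list \<Rightarrow> nat \<Rightarrow> real" where "X j h a = (\<Sum>s\<in>Arr j. est s h a)"

lemma Ob_Suc: "Ob (Suc n) = Ob n \<union> Arr (Suc n)" and Ob_Arr_disj: "Ob n \<inter> Arr (Suc n) = {}"
  unfolding Ob_def Arr_def by auto

lemma Lobs_Suc: "Lobs (Suc n) h a = Lobs n h a + X (Suc n) h a"
  unfolding Lobs_def X_def Ob_Suc using Ob_Arr_disj
  by (subst sum.union_disjoint) (auto simp: Ob_def Arr_def)

lemma P_step: "P (Suc (Suc n)) h a = P (Suc n) h a * exp (- et * X (Suc n) h a)
    / (\<Sum>b\<in>{1..K}. P (Suc n) h b * exp (- et * X (Suc n) h b))"
proof -
  define S where "S = (\<Sum>b\<in>{1..K}. exp (- et * Lobs n h b))"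
  have S: "S > 0" unfolding S_def by (rule sum_exp_pos)
  have e: "exp (- et * Lobs (Suc n) h b) = S * (P (Suc n) h b * exp (- et * X (Suc n) h b))" for b
    using S unfolding Lobs_Suc P_Suc S_def[symmetric] by (simp add: distrib_left exp_add[symmetric])
  have "P (Suc (Suc n)) h a = (S * (P (Suc n) h a * exp (- et * X (Suc n) h a)))
    / (S * (\<Sum>b\<in>{1..K}. P (Suc n) h b * exp (- et * X (Suc n) h b)))"
    unfolding P_Suc[of "Suc n"] e by (simp add: sum_distrib_left)
  then show ?thesis using S by simp
qed

definition Cnt :: "nat \<Rightarrow> nat \<Rightarrow> nat" where
  "Cnt m n = card {u. 1 \<le> u \<and> m < u + d u \<and> u + d u \<le> n \<and> real (d u) < beta}"

lemma Cnt_Suc: assumes "m \<le> n" shows "Cnt m (Suc n) = Cnt m n + card (Arr (Suc n))"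
proof -
  have eq: "{u. 1 \<le> u \<and> m < u + d u \<and> u + d u \<le> Suc n \<and> real (d u) < beta}
    = {u. 1 \<le> u \<and> m < u + d u \<and> u + d u \<le> n \<and> real (d u) < beta} \<union> Arr (Suc n)"
    using assms unfolding Arr_def by auto
  have f: "finite {u. 1 \<le> u \<and> m < u + d u \<and> u + d u \<le> n \<and> real (d u) < beta}"
    by (rule finite_subset[of _ "{1..n}"]) auto
  have f2: "finite (Arr (Suc n))" unfolding Arr_def by simp
  show ?thesis unfolding Cnt_def eq
    by (subst card_Un_disjoint) (use f f2 in \<open>auto simp: Arr_def\<close>)
qed

lemma Cnt_self: "Cnt n n = 0"
proof -
  have e: "{u. 1 \<le> u \<and> n < u + d u \<and> u + d u \<le> n \<and> real (d u) < beta} = {}" by auto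
  show ?thesis unfolding Cnt_def e by simp
qed

lemma Cnt_le: assumes "m \<le> n" shows "Cnt m n \<le> (n - m) + B0"
proof -
  have sub: "{u. 1 \<le> u \<and> m < u + d u \<and> u + d u \<le> n \<and> real (d u) < beta} \<subseteq> {m + 1 - B0..n}"
  proof
    fix u assume "u \<in> {u. 1 \<le> u \<and> m < u + d u \<and> u + d u \<le> n \<and> real (d u) < beta}"
    then have "1 \<le> u" "m < u + d u" "u + d u \<le> n" "d u \<le> B0" using B0_iff by auto
    then show "u \<in> {m + 1 - B0..n}" by auto
  qed
  have "Cnt m n \<le> card {m + 1 - B0..n}" unfolding Cnt_def by (rule card_mono[OF _ sub]) simp
  also have "\<dots> = Suc n - (m + 1 - B0)" by simp
  also have "\<dots> \<le> (n - m) + B0" using assms by simp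
  finally show ?thesis .
qed

lemma cnt_ok: assumes "m \<le> n" "real (n - m) < beta" shows "et * exp 1 * Cnt m n \<le> 1/2"
proof -
  have "n - m \<le> B0" using B0_iff[of "n - m"] assms(2) by blast
  then have "Cnt m n \<le> 2 * B0" using Cnt_le[OF assms(1)] by simp
  then have "real (Cnt m n) \<le> 2 * beta" using B0_less by linarith
  then have "et * exp 1 * Cnt m n \<le> et * exp 1 * (2 * beta)"
    using et_pos by (intro mult_left_mono) auto
  then show ?thesis using et_beta by simp
qed

lemma ratio: "m \<le> n \<Longrightarrow> real (n - m) < beta \<Longrightarrow> a \<in> {1..K} \<Longrightarrow>
  P (Suc n) h a \<le> exp (2 * et * exp 1 * Cnt m n) * P (Suc m) h a"
proof (induction n arbitrary: m a)
  case 0 then show ?case by (simp add: Cnt_self)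
next
  case (Suc n)
  show ?case
  proof (cases "m = Suc n")
    case True then show ?thesis by (simp add: Cnt_self)
  next
    case False
    then have mn: "m \<le> n" and mb: "real (n - m) < beta" using Suc.prems by auto
    let ?Q = "P (Suc n) h"
    define A where "A = Arr (Suc n)"
    have ratio_e: "?Q x \<le> exp 1 * P s h x" if "s \<in> A" "x \<in> {1..K}" for s x
    proof -
      have s: "1 \<le> s" "s + d s = Suc n" "real (d s) < beta" using that unfolding A_def Arr_def by auto
      have "?Q x \<le> exp (2 * et * exp 1 * Cnt (s - 1) n) * P (Suc (s - 1)) h x"
        using s that by (intro Suc.IH) auto
      moreover have "exp (2 * et * exp 1 * Cnt (s - 1) n) \<le> exp 1"
      proof -
        have "n - (s - 1) = d s" using s by simp
        then have "et * exp 1 * Cnt (s - 1) n \<le> 1/2" using s by (intro cnt_ok) auto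
        then show ?thesis by simp
      qed
      ultimately show ?thesis using s P_pos'[of s h x]
        by (smt (verit, ccfv_SIG) One_nat_def Suc_pred less_eq_Suc_le mult_right_mono)
    qed
    have sQX: "(\<Sum>b\<in>{1..K}. ?Q b * X (Suc n) h b) \<le> exp 1 * card A"
    proof -
      have "(\<Sum>b\<in>{1..K}. ?Q b * X (Suc n) h b) = (\<Sum>s\<in>A. \<Sum>b\<in>{1..K}. ?Q b * est s h b)"
        unfolding X_def A_def sum_distrib_left by (rule sum.swap)
      also have "\<dots> \<le> (\<Sum>s\<in>A. exp 1)"
      proof (rule sum_mono)
        fix s assume sA: "s \<in> A"
        then have s1: "1 \<le> s" unfolding A_def Arr_def by auto
        show "(\<Sum>b\<in>{1..K}. ?Q b * est s h b) \<le> exp 1"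
        proof (cases "h ! (s - 1) \<in> {1..K}")
          case True
          let ?x = "h ! (s - 1)"
          have "?Q ?x * l s ?x / P s h ?x \<le> ?Q ?x / P s h ?x"
            using loss[OF True, of s] P_pos'[OF s1, of h ?x] P_pos[of n h ?x]
            by (simp add: divide_right_mono mult_left_le)
          also have "\<dots> \<le> exp 1" using ratio_e[OF sA True] P_pos'[OF s1, of h ?x]
            by (simp add: divide_le_eq)
          finally show ?thesis using True sum_est[OF s1, of ?Q h] by simp
        next
          case False then show ?thesis using sum_est[OF s1, of ?Q h] by auto
        qed
      qed
      also have "\<dots> = exp 1 * card A" by simp
      finally show ?thesis .
    qed
    define x where "x = et * exp 1 * card A"
    have x0: "x \<ge> 0" unfolding x_def using et_pos by simp
    have "card A \<le> Cnt m (Suc n)" unfolding A_def using Cnt_Suc[OF mn] by simp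
    then have "x \<le> et * exp 1 * Cnt m (Suc n)" unfolding x_def using et_pos by (intro mult_left_mono) auto
    also have "\<dots> \<le> 1/2" using cnt_ok[of m "Suc n"] Suc.prems by simp
    finally have x12: "x \<le> 1/2" .
    define Z where "Z = (\<Sum>b\<in>{1..K}. ?Q b * exp (- et * X (Suc n) h b))"
    have "Z \<ge> (\<Sum>b\<in>{1..K}. ?Q b * (1 - et * X (Suc n) h b))"
      unfolding Z_def
    proof (rule sum_mono)
      fix b assume "b \<in> {1..K}"
      show "?Q b * (1 - et * X (Suc n) h b) \<le> ?Q b * exp (- et * X (Suc n) h b)"
        using P_pos[of n h b] exp_ge_add_one_self[of "- et * X (Suc n) h b"]
        by (intro mult_left_mono) auto
    qed
    also have "(\<Sum>b\<in>{1..K}. ?Q b * (1 - et * X (Suc n) h b)) = 1 - et * (\<Sum>b\<in>{1..K}. ?Q b * X (Suc n) h b)"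
      by (simp add: right_diff_distrib sum_subtractf sum_distrib_left P_sum mult.left_commute)
    also have "\<dots> \<ge> 1 - x"
      unfolding x_def using sQX et_pos by (smt (verit) mult_left_mono mult.assoc)
    finally have Zx: "Z \<ge> 1 - x" .
    have Xa: "X (Suc n) h a \<ge> 0" unfolding X_def using Suc.prems(3)
      by (intro sum_nonneg est_nonneg) (auto simp: Arr_def)
    have "P (Suc (Suc n)) h a = ?Q a * exp (- et * X (Suc n) h a) / Z" unfolding Z_def by (rule P_step)
    also have "\<dots> \<le> ?Q a / Z"
      using Zx x12 Xa et_pos P_pos[of n h a]
      by (intro divide_right_mono mult_left_le) auto
    also have "\<dots> \<le> ?Q a / (1 - x)"
      using Zx x12 P_pos[of n h a] by (intro divide_left_mono) auto
    also have "\<dots> = ?Q a * (1 / (1 - x))" by simp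
    also have "\<dots> \<le> ?Q a * exp (2 * x)"
      using inv_bound[OF x0 x12] P_pos[of n h a] by (intro mult_left_mono) auto
    also have "\<dots> \<le> exp (2 * et * exp 1 * Cnt m n) * P (Suc m) h a * exp (2 * x)"
      using Suc.IH[OF mn mb Suc.prems(3)] by (intro mult_right_mono) auto
    also have "\<dots> = exp (2 * et * exp 1 * Cnt m (Suc n)) * P (Suc m) h a"
      unfolding Cnt_Suc[OF mn] x_def A_def by (simp add: exp_add[symmetric] algebra_simps)
    finally show ?thesis .
  qed
qed

lemma ratio_e: "m \<le> n \<Longrightarrow> real (n - m) < beta \<Longrightarrow> a \<in> {1..K} \<Longrightarrow>
  P (Suc n) h a \<le> exp 1 * P (Suc m) h a"
proof -
  assume a: "m \<le> n" "real (n - m) < beta" "a \<in> {1..K}"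
  have "exp (2 * et * exp 1 * Cnt m n) \<le> exp 1" using cnt_ok[OF a(1,2)] by simp
  then show ?thesis using ratio[OF a] P_pos[of m h a]
    by (smt (verit) mult_right_mono)
qed

definition Np :: "nat \<Rightarrow> nat set" where "Np n = {s\<in>{1..n}. real (d s) < beta}"
definition Out :: "nat \<Rightarrow> nat set" where "Out n = {s\<in>{1..n}. real (d s) < beta \<and> n < s + d s}"
definition M :: "nat \<Rightarrow> nat list \<Rightarrow> nat \<Rightarrow> real" where "M n h a = (\<Sum>s\<in>Out n. est s h a)"
definition Lfull :: "nat \<Rightarrow> nat list \<Rightarrow> nat \<Rightarrow> real" where "Lfull n h a = (\<Sum>s\<in>Np n. est s h a)"
definition q :: "nat \<Rightarrow> nat list \<Rightarrow> nat \<Rightarrow> real" where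
  "q n h a = exp (- et * Lfull n h a) / (\<Sum>b\<in>{1..K}. exp (- et * Lfull n h b))"

lemma Lfull_split: "Lfull n h a = Lobs n h a + M n h a"
proof -
  have "Np n = Ob n \<union> Out n" "Ob n \<inter> Out n = {}" unfolding Np_def Ob_def Out_def by auto
  then show ?thesis unfolding Lfull_def Lobs_def M_def by (simp add: sum.union_disjoint Ob_def Out_def)
qed

lemma M_nonneg: "a \<in> {1..K} \<Longrightarrow> M n h a \<ge> 0"
  unfolding M_def by (intro sum_nonneg est_nonneg) (auto simp: Out_def)

definition Zq :: "nat \<Rightarrow> nat list \<Rightarrow> real" where
  "Zq n h = (\<Sum>b\<in>{1..K}. P (Suc n) h b * exp (- et * M n h b))"

lemma q_rel: "q n h a = P (Suc n) h a * exp (- et * M n h a) / Zq n h"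
proof -
  define S where "S = (\<Sum>b\<in>{1..K}. exp (- et * Lobs n h b))"
  have S: "S > 0" unfolding S_def by (rule sum_exp_pos)
  have e: "exp (- et * Lfull n h b) = S * (P (Suc n) h b * exp (- et * M n h b))" for b
    using S unfolding Lfull_split P_Suc S_def[symmetric] by (simp add: distrib_left exp_add[symmetric])
  have "q n h a = (S * (P (Suc n) h a * exp (- et * M n h a)))
    / (S * Zq n h)"
    unfolding q_def e Zq_def by (simp add: sum_distrib_left)
  then show ?thesis using S by simp
qed

lemma Zq_le1: "Zq n h \<le> 1"
proof -
  have "Zq n h \<le> (\<Sum>b\<in>{1..K}. P (Suc n) h b)"
    unfolding Zq_def
  proof (rule sum_mono)
    fix b assume b: "b \<in> {1..K}"
    show "P (Suc n) h b * exp (- et * M n h b) \<le> P (Suc n) h b"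
      using M_nonneg[OF b, of n h] et_pos P_pos[of n h b] by (intro mult_left_le) auto
  qed
  then show ?thesis by (simp add: P_sum)
qed

lemma card_Out: "card (Out n) \<le> B0"
proof -
  have sub: "Out n \<subseteq> {n + 1 - B0..n}"
  proof
    fix u assume "u \<in> Out n"
    then have "1 \<le> u" "u \<le> n" "n < u + d u" "d u \<le> B0" unfolding Out_def using B0_iff by auto
    then show "u \<in> {n + 1 - B0..n}" by auto
  qed
  have "card (Out n) \<le> card {n + 1 - B0..n}" by (rule card_mono[OF _ sub]) simp
  also have "\<dots> \<le> B0" by simp
  finally show ?thesis .
qed

lemma Zq_ge: "Zq n h \<ge> 3/4"
proof -
  let ?Q = "P (Suc n) h"
  have sQM: "(\<Sum>b\<in>{1..K}. ?Q b * M n h b) \<le> exp 1 * card (Out n)"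
  proof -
    have "(\<Sum>b\<in>{1..K}. ?Q b * M n h b) = (\<Sum>s\<in>Out n. \<Sum>b\<in>{1..K}. ?Q b * est s h b)"
      unfolding M_def sum_distrib_left by (rule sum.swap)
    also have "\<dots> \<le> (\<Sum>s\<in>Out n. exp 1)"
    proof (rule sum_mono)
      fix s assume sA: "s \<in> Out n"
      then have s1: "1 \<le> s" and sn: "s \<le> n" and sd: "n < s + d s" "real (d s) < beta" unfolding Out_def by auto
      show "(\<Sum>b\<in>{1..K}. ?Q b * est s h b) \<le> exp 1"
      proof (cases "h ! (s - 1) \<in> {1..K}")
        case True
        let ?x = "h ! (s - 1)"
        have "?Q ?x * l s ?x / P s h ?x \<le> ?Q ?x / P s h ?x"
          using loss[OF True, of s] P_pos'[OF s1, of h ?x] P_pos[of n h ?x]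
          by (simp add: divide_right_mono mult_left_le)
        also have "\<dots> \<le> exp 1"
        proof -
          have "real (n - (s - 1)) < beta"
          proof -
            have "n - (s - 1) \<le> d s" using sd s1 by simp
            then show ?thesis using sd(2) by (meson le_less_trans of_nat_le_iff)
          qed
          then have "?Q ?x \<le> exp 1 * P (Suc (s - 1)) h ?x" using sn True by (intro ratio_e) auto
          then show ?thesis using s1 P_pos'[OF s1, of h ?x] by (simp add: divide_le_eq)
        qed
        finally show ?thesis using True sum_est[OF s1, of ?Q h] by simp
      next
        case False then show ?thesis using sum_est[OF s1, of ?Q h] by auto
      qed
    qed
    also have "\<dots> = exp 1 * card (Out n)" by simp
    finally show ?thesis .
  qed
  have "Zq n h \<ge> (\<Sum>b\<in>{1..K}. ?Q b * (1 - et * M n h b))"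
    unfolding Zq_def
  proof (rule sum_mono)
    fix b assume "b \<in> {1..K}"
    show "?Q b * (1 - et * M n h b) \<le> ?Q b * exp (- et * M n h b)"
      using P_pos[of n h b] exp_ge_add_one_self[of "- et * M n h b"]
      by (intro mult_left_mono) auto
  qed
  also have "(\<Sum>b\<in>{1..K}. ?Q b * (1 - et * M n h b)) = 1 - et * (\<Sum>b\<in>{1..K}. ?Q b * M n h b)"
    by (simp add: right_diff_distrib sum_subtractf sum_distrib_left P_sum mult.left_commute)
  finally have z1: "Zq n h \<ge> 1 - et * (\<Sum>b\<in>{1..K}. ?Q b * M n h b)" .
  have z2: "et * (\<Sum>b\<in>{1..K}. ?Q b * M n h b) \<le> et * (exp 1 * card (Out n))"
    using sQM et_pos by (intro mult_left_mono) auto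
  have z3: "et * (exp 1 * card (Out n)) \<le> et * (exp 1 * beta)"
    using card_Out[of n] B0_less et_pos by (intro mult_left_mono) auto
  show ?thesis using z1 z2 z3 et_beta by (simp add: mult.assoc)
qed

lemma q_le: "a \<in> {1..K} \<Longrightarrow> q n h a \<le> 4/3 * P (Suc n) h a"
proof -
  assume a: "a \<in> {1..K}"
  have "q n h a \<le> P (Suc n) h a / Zq n h"
    unfolding q_rel using Zq_ge[of n h] M_nonneg[OF a, of n h] et_pos P_pos[of n h a]
    by (intro divide_right_mono mult_left_le) auto
  also have "\<dots> \<le> P (Suc n) h a / (3/4)"
    using Zq_ge[of n h] P_pos[of n h a] by (intro divide_left_mono) auto
  finally show ?thesis by simp
qed

lemma drift_pw: "(\<Sum>a\<in>{1..K}. P (Suc n) h a * l (Suc n) a) - (\<Sum>a\<in>{1..K}. q n h a * l (Suc n) a)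
  \<le> et * (\<Sum>a\<in>{1..K}. P (Suc n) h a * M n h a)"
proof -
  have "P (Suc n) h a * l (Suc n) a - q n h a * l (Suc n) a \<le> et * (P (Suc n) h a * M n h a)"
    if a: "a \<in> {1..K}" for a
  proof -
    let ?p = "P (Suc n) h a" and ?m = "M n h a" and ?l = "l (Suc n) a" and ?Z = "Zq n h"
    have Z: "0 < ?Z" "?Z \<le> 1" using Zq_ge[of n h] Zq_le1[of n h] by auto
    have pl: "0 \<le> ?p * ?l" using loss[OF a] P_pos[of n h a] by simp
    have "exp (- et * ?m) \<le> exp (- et * ?m) / ?Z" using Z by (simp add: le_divide_eq)
    then have "?p * ?l * exp (- et * ?m) \<le> ?p * ?l * (exp (- et * ?m) / ?Z)"
      using pl by (intro mult_left_mono) auto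
    then have "?p * ?l - q n h a * ?l \<le> ?p * ?l * (1 - exp (- et * ?m))"
      unfolding q_rel by (simp add: algebra_simps)
    also have "\<dots> \<le> ?p * ?l * (et * ?m)"
      using pl exp_ge_add_one_self[of "- et * ?m"] by (intro mult_left_mono) auto
    also have "\<dots> \<le> ?p * 1 * (et * ?m)"
      using loss[OF a] P_pos[of n h a] M_nonneg[OF a, of n h] et_pos
      by (intro mult_right_mono mult_left_mono) auto
    finally show ?thesis by (simp add: algebra_simps)
  qed
  then have "(\<Sum>a\<in>{1..K}. P (Suc n) h a * l (Suc n) a - q n h a * l (Suc n) a)
    \<le> (\<Sum>a\<in>{1..K}. et * (P (Suc n) h a * M n h a))" by (intro sum_mono) auto
  then show ?thesis by (simp add: sum_subtractf sum_distrib_left)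
qed

lemma est_take: "1 \<le> s \<Longrightarrow> s \<le> m \<Longrightarrow> est s (take m h) a = est s h a"
  unfolding est_def using P_take[of "s - 1" m h] by simp

lemma est_append: "1 \<le> s \<Longrightarrow> s \<le> length h \<Longrightarrow> est s (h @ xs) a = est s h a"
proof -
  assume "1 \<le> s" "s \<le> length h"
  then have "s - 1 < length h" by simp
  moreover have "P s (h @ xs) = P s h" using P_append[of "s - 1" h xs] \<open>1 \<le> s\<close> \<open>s \<le> length h\<close> by simp
  ultimately show ?thesis unfolding est_def by (simp add: nth_append)
qed

lemma est_last: "length h = n \<Longrightarrow> est (Suc n) (h @ [b]) a = (if a = b then l (Suc n) a / P (Suc n) h a else 0)"
proof -
  assume len: "length h = n"
  then have "(h @ [b]) ! n = b" by (simp add: nth_append)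
  then show ?thesis unfolding est_def using P_append[of n h "[b]"] len by simp
qed

lemma Lfull_take: "n \<le> m \<Longrightarrow> Lfull n (take m h) a = Lfull n h a"
  unfolding Lfull_def by (intro sum.cong refl est_take) (auto simp: Np_def)

lemma Lfull_append: "n \<le> length h \<Longrightarrow> Lfull n (h @ xs) a = Lfull n h a"
  unfolding Lfull_def by (intro sum.cong refl est_append) (auto simp: Np_def)

lemma q_take: "n \<le> m \<Longrightarrow> q n (take m h) = q n h"
  unfolding q_def by (intro ext) (simp add: Lfull_take)

lemma q_append: "n \<le> length h \<Longrightarrow> q n (h @ xs) = q n h"
  unfolding q_def by (intro ext) (simp add: Lfull_append)

lemma E_last: assumes "Suc n \<le> T" "\<And>h. f (take (Suc n) h) = f h"
  shows "E T f = E n (\<lambda>h. \<Sum>b\<in>{1..K}. P (Suc n) h b * f (h @ [b]))"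
proof -
  have "E T f = E T (\<lambda>h. f (take (Suc n) h))" using assms(2) by simp
  also have "\<dots> = E (Suc n) f" by (rule E_take[OF assms(1)])
  also have "\<dots> = E n (\<lambda>h. \<Sum>b\<in>{1..K}. P (Suc n) h b * f (h @ [b]))" by (rule E_Suc)
  finally show ?thesis .
qed

lemma R1: "Suc n \<le> T \<Longrightarrow> E T (\<lambda>h. l (Suc n) (h ! n)) = E n (\<lambda>h. \<Sum>a\<in>{1..K}. P (Suc n) h a * l (Suc n) a)"
  by (subst E_last[of n T]) (auto intro!: E_cong simp: H_def nth_append)

lemma R2: "Suc n \<le> T \<Longrightarrow> E T (\<lambda>h. \<Sum>a\<in>{1..K}. q n h a * est (Suc n) h a)
   = E n (\<lambda>h. \<Sum>a\<in>{1..K}. q n h a * l (Suc n) a)"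
proof (subst E_last[of n T])
  show "(\<Sum>a\<in>{1..K}. q n (take (Suc n) h) a * est (Suc n) (take (Suc n) h) a) = (\<Sum>a\<in>{1..K}. q n h a * est (Suc n) h a)" for h
    by (simp add: q_take est_take)
  show "E n (\<lambda>h. \<Sum>b\<in>{1..K}. P (Suc n) h b * (\<Sum>a\<in>{1..K}. q n (h @ [b]) a * est (Suc n) (h @ [b]) a))
    = E n (\<lambda>h. \<Sum>a\<in>{1..K}. q n h a * l (Suc n) a)"
  proof (rule E_cong)
    fix h assume h: "h \<in> H n"
    then have len: "length h = n" by (simp add: H_def)
    have "P (Suc n) h b * (\<Sum>a\<in>{1..K}. q n (h @ [b]) a * est (Suc n) (h @ [b]) a) = q n h b * l (Suc n) b"
      if b: "b \<in> {1..K}" for b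
      using b P_pos[of n h b] by (simp add: q_append len est_last sum_if_eq)
    then show "(\<Sum>b\<in>{1..K}. P (Suc n) h b * (\<Sum>a\<in>{1..K}. q n (h @ [b]) a * est (Suc n) (h @ [b]) a))
      = (\<Sum>a\<in>{1..K}. q n h a * l (Suc n) a)" by (rule sum.cong[OF refl])
  qed
qed simp

lemma R3: "Suc n \<le> T \<Longrightarrow> E T (\<lambda>h. \<Sum>a\<in>{1..K}. q n h a * (est (Suc n) h a)\<^sup>2)
   = E n (\<lambda>h. \<Sum>a\<in>{1..K}. q n h a * (l (Suc n) a)\<^sup>2 / P (Suc n) h a)"
proof (subst E_last[of n T])
  show "(\<Sum>a\<in>{1..K}. q n (take (Suc n) h) a * (est (Suc n) (take (Suc n) h) a)\<^sup>2) = (\<Sum>a\<in>{1..K}. q n h a * (est (Suc n) h a)\<^sup>2)" for h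
    by (simp add: q_take est_take)
  show "E n (\<lambda>h. \<Sum>b\<in>{1..K}. P (Suc n) h b * (\<Sum>a\<in>{1..K}. q n (h @ [b]) a * (est (Suc n) (h @ [b]) a)\<^sup>2))
    = E n (\<lambda>h. \<Sum>a\<in>{1..K}. q n h a * (l (Suc n) a)\<^sup>2 / P (Suc n) h a)"
  proof (rule E_cong)
    fix h assume h: "h \<in> H n"
    then have len: "length h = n" by (simp add: H_def)
    have "P (Suc n) h b * (\<Sum>a\<in>{1..K}. q n (h @ [b]) a * (est (Suc n) (h @ [b]) a)\<^sup>2) = q n h b * (l (Suc n) b)\<^sup>2 / P (Suc n) h b"
      if b: "b \<in> {1..K}" for b
    proof -
      have "(\<Sum>a\<in>{1..K}. q n (h @ [b]) a * (est (Suc n) (h @ [b]) a)\<^sup>2)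
         = (\<Sum>a\<in>{1..K}. q n h a * (if a = b then (l (Suc n) a / P (Suc n) h a)\<^sup>2 else 0))"
        by (rule sum.cong) (auto simp: q_append len est_last)
      then show ?thesis using b P_pos[of n h b] by (simp add: sum_if_eq power2_eq_square)
    qed
    then show "(\<Sum>b\<in>{1..K}. P (Suc n) h b * (\<Sum>a\<in>{1..K}. q n (h @ [b]) a * (est (Suc n) (h @ [b]) a)\<^sup>2))
      = (\<Sum>a\<in>{1..K}. q n h a * (l (Suc n) a)\<^sup>2 / P (Suc n) h a)" by (rule sum.cong[OF refl])
  qed
qed simp

lemma R4: "Suc n \<le> T \<Longrightarrow> a \<in> {1..K} \<Longrightarrow> E T (\<lambda>h. est (Suc n) h a) = l (Suc n) a"
proof (subst E_last[of n T])
  assume a: "a \<in> {1..K}"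
  show "est (Suc n) (take (Suc n) h) a = est (Suc n) h a" for h by (simp add: est_take)
  have "E n (\<lambda>h. \<Sum>b\<in>{1..K}. P (Suc n) h b * est (Suc n) (h @ [b]) a) = E n (\<lambda>h. l (Suc n) a)"
  proof (rule E_cong)
    fix h assume h: "h \<in> H n"
    then have len: "length h = n" by (simp add: H_def)
    have "(\<Sum>b\<in>{1..K}. P (Suc n) h b * est (Suc n) (h @ [b]) a)
      = (\<Sum>b\<in>{1..K}. P (Suc n) h b * (if b = a then l (Suc n) a / P (Suc n) h a else 0))"
      by (rule sum.cong) (auto simp: len est_last)
    also have "\<dots> = l (Suc n) a" using a P_pos[of n h a] by (simp add: sum_if_eq)
    finally show "(\<Sum>b\<in>{1..K}. P (Suc n) h b * est (Suc n) (h @ [b]) a) = l (Suc n) a" .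
  qed
  then show "E n (\<lambda>h. \<Sum>b\<in>{1..K}. P (Suc n) h b * est (Suc n) (h @ [b]) a) = l (Suc n) a"
    by (simp add: E_const)
qed simp

lemma E_nonneg: "(\<And>h. h \<in> H n \<Longrightarrow> f h \<ge> 0) \<Longrightarrow> E n f \<ge> 0"
  using E_mono[of n "\<lambda>_. 0" f] by (simp add: E_const)

lemma drift_E: assumes s: "s \<in> Out n" shows "E n (\<lambda>h. \<Sum>a\<in>{1..K}. P (Suc n) h a * est s h a) \<le> 1"
proof -
  have s1: "1 \<le> s" and sn: "s \<le> n" and sd: "n < s + d s" using s unfolding Out_def by auto
  have "E n (\<lambda>h. \<Sum>a\<in>{1..K}. P (Suc n) h a * est s h a) = (\<Sum>a\<in>{1..K}. E n (\<lambda>h. P (Suc n) h a * est s h a))"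
    by (rule E_sum)
  also have "\<dots> \<le> (\<Sum>a\<in>{1..K}. E n (\<lambda>h. P (Suc n) h a))"
  proof (rule sum_mono)
    fix a assume a: "a \<in> {1..K}"
    have "E n (\<lambda>h. P (Suc n) h a * est s h a)
      = E n (\<lambda>h. P (Suc n) h a * (if h ! (s - 1) = a then l s a / P s h a else 0))"
      unfolding est_def by (rule E_cong) auto
    also have "\<dots> = l s a * E n (\<lambda>h. P (Suc n) h a)"
    proof (rule E_indep[OF s1 sn a])
      show "P v (h[s - 1 := a]) = P v h" if "s < v" "v \<le> n" for v h
        using P_upd[OF s1, of "v - 1" h a] that sd by simp
      show "P (Suc n) (h[s - 1 := a]) a = P (Suc n) h a" for h
        using P_upd[OF s1 sd] by simp
    qed
    also have "\<dots> \<le> 1 * E n (\<lambda>h. P (Suc n) h a)"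
      using loss[OF a, of s] E_nonneg[of n "\<lambda>h. P (Suc n) h a"] P_pos[of n _ a]
      by (intro mult_right_mono) (auto intro: less_imp_le)
    finally show "E n (\<lambda>h. P (Suc n) h a * est s h a) \<le> E n (\<lambda>h. P (Suc n) h a)" by simp
  qed
  also have "\<dots> = E n (\<lambda>h. \<Sum>a\<in>{1..K}. P (Suc n) h a)" by (rule E_sum[symmetric])
  also have "\<dots> = 1" by (simp add: P_sum E_const)
  finally show ?thesis .
qed

lemma drift_total: "E n (\<lambda>h. \<Sum>a\<in>{1..K}. P (Suc n) h a * l (Suc n) a)
    - E n (\<lambda>h. \<Sum>a\<in>{1..K}. q n h a * l (Suc n) a) \<le> et * card (Out n)"
proof -
  have "E n (\<lambda>h. \<Sum>a\<in>{1..K}. P (Suc n) h a * l (Suc n) a) - E n (\<lambda>h. \<Sum>a\<in>{1..K}. q n h a * l (Suc n) a)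
     = E n (\<lambda>h. (\<Sum>a\<in>{1..K}. P (Suc n) h a * l (Suc n) a) - (\<Sum>a\<in>{1..K}. q n h a * l (Suc n) a))"
    by (rule E_diff[symmetric])
  also have "\<dots> \<le> E n (\<lambda>h. et * (\<Sum>s\<in>Out n. \<Sum>a\<in>{1..K}. P (Suc n) h a * est s h a))"
  proof (rule E_mono)
    fix h
    have "(\<Sum>a\<in>{1..K}. P (Suc n) h a * M n h a) = (\<Sum>s\<in>Out n. \<Sum>a\<in>{1..K}. P (Suc n) h a * est s h a)"
      unfolding M_def sum_distrib_left by (rule sum.swap)
    then show "(\<Sum>a\<in>{1..K}. P (Suc n) h a * l (Suc n) a) - (\<Sum>a\<in>{1..K}. q n h a * l (Suc n) a)
      \<le> et * (\<Sum>s\<in>Out n. \<Sum>a\<in>{1..K}. P (Suc n) h a * est s h a)"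
      using drift_pw[of n h] by simp
  qed
  also have "\<dots> = et * (\<Sum>s\<in>Out n. E n (\<lambda>h. \<Sum>a\<in>{1..K}. P (Suc n) h a * est s h a))"
    by (simp add: E_cmult E_sum)
  also have "\<dots> \<le> et * (\<Sum>s\<in>Out n. 1)"
    using et_pos drift_E by (intro mult_left_mono sum_mono) auto
  finally show ?thesis by simp
qed

lemma sq_pw: "(\<Sum>a\<in>{1..K}. q n h a * (l (Suc n) a)\<^sup>2 / P (Suc n) h a) \<le> exp 1 * K"
proof -
  have "(\<Sum>a\<in>{1..K}. q n h a * (l (Suc n) a)\<^sup>2 / P (Suc n) h a) \<le> (\<Sum>a\<in>{1..K}. exp 1)"
  proof (rule sum_mono)
    fix a assume a: "a \<in> {1..K}"
    have p: "P (Suc n) h a > 0" by (rule P_pos)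
    have qn: "q n h a \<ge> 0" unfolding q_def using sum_exp_pos by (simp add: less_imp_le)
    have "(l (Suc n) a)\<^sup>2 \<le> 1" using loss[OF a] by (simp add: power_le_one)
    then have "q n h a * (l (Suc n) a)\<^sup>2 \<le> q n h a" using qn by (simp add: mult_left_le)
    also have "\<dots> \<le> 4/3 * P (Suc n) h a" by (rule q_le[OF a])
    also have "\<dots> \<le> exp 1 * P (Suc n) h a" using p exp_ge_add_one_self[of 1]
      by (intro mult_right_mono) auto
    finally show "q n h a * (l (Suc n) a)\<^sup>2 / P (Suc n) h a \<le> exp 1" using p by (simp add: divide_le_eq)
  qed
  then show ?thesis by (simp add: mult.commute)
qed

lemma count_Out: "(\<Sum>n<T. card (Out n)) \<le> D_beta beta d T"
proof -
  define Ns where "Ns = {t\<in>{1..T}. real (d t) < beta}"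
  have fNs: "finite Ns" unfolding Ns_def by simp
  have D: "D_beta beta d T = (\<Sum>s\<in>Ns. d s)"
  proof -
    have "{1..T} - S_beta beta d T = Ns" unfolding Ns_def S_beta_def by auto
    then show ?thesis unfolding D_beta_def by simp
  qed
  have c: "card (Out n) = (\<Sum>s\<in>Ns. if s \<le> n \<and> n < s + d s then 1 else 0)" if "n < T" for n
  proof -
    have "Out n = {s\<in>Ns. s \<le> n \<and> n < s + d s}" unfolding Out_def Ns_def using that by auto
    then show ?thesis by (simp only:) (subst card_eq_sum, rule sum.inter_filter[OF fNs])
  qed
  have "(\<Sum>n<T. card (Out n)) = (\<Sum>n<T. \<Sum>s\<in>Ns. if s \<le> n \<and> n < s + d s then 1 else 0)"
    using c by simp
  also have "\<dots> = (\<Sum>s\<in>Ns. \<Sum>n<T. if s \<le> n \<and> n < s + d s then 1 else 0)" by (rule sum.swap)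
  also have "\<dots> \<le> (\<Sum>s\<in>Ns. d s)"
  proof (rule sum_mono)
    fix s
    have "(\<Sum>n<T. if s \<le> n \<and> n < s + d s then 1 else (0::nat)) = card {n\<in>{..<T}. s \<le> n \<and> n < s + d s}"
      by (subst card_eq_sum, rule sum.inter_filter[symmetric]) simp
    also have "\<dots> \<le> card {s..<s + d s}" by (rule card_mono) auto
    finally show "(\<Sum>n<T. if s \<le> n \<and> n < s + d s then 1 else (0::nat)) \<le> d s" by simp
  qed
  finally show ?thesis using D by simp
qed

lemma pointwise_ew: assumes astar: "astar \<in> {1..K}"
  shows "(\<Sum>t\<in>Np T. \<Sum>a\<in>{1..K}. q (t - 1) h a * est t h a)
    \<le> ln (real K) / et + Lfull T h astar + et / 2 * (\<Sum>t\<in>Np T. \<Sum>a\<in>{1..K}. q (t - 1) h a * (est t h a)\<^sup>2)"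
proof -
  define x where "x t a = (if 1 \<le> t \<and> real (d t) < beta then est t h a else 0)" for t a
  have Xc: "Lfull n h a = (\<Sum>t\<in>{1..n}. x t a)" for n a
  proof -
    have "(\<Sum>t\<in>{1..n}. x t a) = (\<Sum>t\<in>{t\<in>{1..n}. 1 \<le> t \<and> real (d t) < beta}. est t h a)"
      unfolding x_def by (rule sum.inter_filter[symmetric]) simp
    also have "{t\<in>{1..n}. 1 \<le> t \<and> real (d t) < beta} = Np n" unfolding Np_def by auto
    finally show ?thesis unfolding Lfull_def by simp
  qed
  have ew: "(\<Sum>t\<in>{1..T}. \<Sum>a\<in>{1..K}. q (t - 1) h a * x t a)
     \<le> ln (real K) / et + Lfull T h astar + et / 2 * (\<Sum>t\<in>{1..T}. \<Sum>a\<in>{1..K}. q (t - 1) h a * (x t a)\<^sup>2)"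
  proof (rule ew_bound[OF et_pos K1 _ astar])
    show "0 \<le> x t a" if "a \<in> {1..K}" for t a unfolding x_def using est_nonneg[OF that] by auto
    show "Lfull n h a = (\<Sum>t\<in>{1..n}. x t a)" for n a by (rule Xc)
    show "q n h a = exp (- et * Lfull n h a) / (\<Sum>b\<in>{1..K}. exp (- et * Lfull n h b))" for n a
      by (rule q_def)
  qed
  have c1: "(\<Sum>t\<in>{1..T}. \<Sum>a\<in>{1..K}. q (t - 1) h a * x t a) = (\<Sum>t\<in>Np T. \<Sum>a\<in>{1..K}. q (t - 1) h a * est t h a)"
  proof -
    have "(\<Sum>t\<in>{1..T}. \<Sum>a\<in>{1..K}. q (t - 1) h a * x t a)
      = (\<Sum>t\<in>{1..T}. if 1 \<le> t \<and> real (d t) < beta then (\<Sum>a\<in>{1..K}. q (t - 1) h a * est t h a) else 0)"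
      unfolding x_def by (rule sum.cong) auto
    also have "\<dots> = (\<Sum>t\<in>{t\<in>{1..T}. 1 \<le> t \<and> real (d t) < beta}. \<Sum>a\<in>{1..K}. q (t - 1) h a * est t h a)"
      by (rule sum.inter_filter[symmetric]) simp
    also have "{t\<in>{1..T}. 1 \<le> t \<and> real (d t) < beta} = Np T" unfolding Np_def by auto
    finally show ?thesis .
  qed
  have c2: "(\<Sum>t\<in>{1..T}. \<Sum>a\<in>{1..K}. q (t - 1) h a * (x t a)\<^sup>2) = (\<Sum>t\<in>Np T. \<Sum>a\<in>{1..K}. q (t - 1) h a * (est t h a)\<^sup>2)"
  proof -
    have "(\<Sum>t\<in>{1..T}. \<Sum>a\<in>{1..K}. q (t - 1) h a * (x t a)\<^sup>2)
      = (\<Sum>t\<in>{1..T}. if 1 \<le> t \<and> real (d t) < beta then (\<Sum>a\<in>{1..K}. q (t - 1) h a * (est t h a)\<^sup>2) else 0)"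
      unfolding x_def by (rule sum.cong) auto
    also have "\<dots> = (\<Sum>t\<in>{t\<in>{1..T}. 1 \<le> t \<and> real (d t) < beta}. \<Sum>a\<in>{1..K}. q (t - 1) h a * (est t h a)\<^sup>2)"
      by (rule sum.inter_filter[symmetric]) simp
    also have "{t\<in>{1..T}. 1 \<le> t \<and> real (d t) < beta} = Np T" unfolding Np_def by auto
    finally show ?thesis .
  qed
  show ?thesis using ew unfolding c1 c2 .
qed

lemma shift_sum: fixes T :: nat and f :: "nat \<Rightarrow> real" shows "(\<Sum>t\<in>{1..T}. f (t - 1)) = (\<Sum>n<T. f n)"
  by (induction T) simp_all

lemma ln_et: "ln (real K) / et \<le> max (ln (real K) / eta) (4 * exp 1 * beta * ln (real K))"
proof (cases "eta \<le> 1 / (4 * exp 1 * beta)")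
  case True
  then have "et = eta" unfolding et_def dew_eta'_def by simp
  then show ?thesis by simp
next
  case False
  then have "et = 1 / (4 * exp 1 * beta)" unfolding et_def dew_eta'_def by simp
  then show ?thesis by (simp add: mult.commute)
qed

theorem main:
  shows "skipper_dew_regret K eta beta l d T
         \<le> real (card (S_beta beta d T))
           + max (ln (real K) / eta) (4 * exp 1 * beta * ln (real K))
           + eta * (real K * real T * exp 1 / 2 + real (D_beta beta d T))"
proof -
  have ne: "(\<lambda>a. \<Sum>t\<in>{1..T}. l t a) ` {1..K} \<noteq> {}" using K1 by auto
  obtain astar where astar: "astar \<in> {1..K}"
    and amin: "(MIN a\<in>{1..K}. \<Sum>t\<in>{1..T}. l t a) = (\<Sum>t\<in>{1..T}. l t astar)"
    using Min_in[OF _ ne] by auto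
  define pl where "pl n = E n (\<lambda>h. \<Sum>a\<in>{1..K}. P (Suc n) h a * l (Suc n) a)" for n
  define ql where "ql n = E n (\<lambda>h. \<Sum>a\<in>{1..K}. q n h a * l (Suc n) a)" for n
  define sq where "sq n = E n (\<lambda>h. \<Sum>a\<in>{1..K}. q n h a * (l (Suc n) a)\<^sup>2 / P (Suc n) h a)" for n
  define S where "S = S_beta beta d T"
  define N where "N = Np T"
  have SN: "{1..T} = S \<union> N" "S \<inter> N = {}" unfolding S_def N_def S_beta_def Np_def by auto
  have fS: "finite S" "finite N" unfolding S_def N_def S_beta_def Np_def by auto
  have reg: "skipper_dew_regret K eta beta l d T = (\<Sum>t\<in>{1..T}. pl (t - 1) - l t astar)"
  proof -
    have "E T (\<lambda>h. \<Sum>t\<in>{1..T}. l t (h ! (t - 1))) = (\<Sum>t\<in>{1..T}. E T (\<lambda>h. l t (h ! (t - 1))))"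
      by (rule E_sum)
    also have "\<dots> = (\<Sum>t\<in>{1..T}. pl (t - 1))"
    proof (rule sum.cong[OF refl])
      fix t assume t: "t \<in> {1..T}"
      then have "Suc (t - 1) = t" by simp
      then show "E T (\<lambda>h. l t (h ! (t - 1))) = pl (t - 1)"
        unfolding pl_def using R1[of "t - 1" T] t by simp
    qed
    finally show ?thesis unfolding skipper_dew_regret_def exp_traj amin by (simp add: sum_subtractf)
  qed
  have pl1: "pl n \<le> 1" for n
  proof -
    have "pl n \<le> E n (\<lambda>h. 1)" unfolding pl_def
    proof (rule E_mono)
      fix h
      have "(\<Sum>a\<in>{1..K}. P (Suc n) h a * l (Suc n) a) \<le> (\<Sum>a\<in>{1..K}. P (Suc n) h a)"
        using loss P_pos[of n h] by (intro sum_mono) (simp add: mult_left_le less_imp_le)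
      then show "(\<Sum>a\<in>{1..K}. P (Suc n) h a * l (Suc n) a) \<le> 1" by (simp add: P_sum)
    qed
    then show ?thesis by (simp add: E_const)
  qed
  have Sb: "(\<Sum>t\<in>S. pl (t - 1) - l t astar) \<le> real (card S)"
  proof -
    have "(\<Sum>t\<in>S. pl (t - 1) - l t astar) \<le> (\<Sum>t\<in>S. 1)"
      using pl1 loss[OF astar] by (intro sum_mono) (smt (verit))
    then show ?thesis by simp
  qed
  have tN: "t \<in> N \<Longrightarrow> Suc (t - 1) = t \<and> Suc (t - 1) \<le> T" for t unfolding N_def Np_def by auto
  have drift: "(\<Sum>t\<in>N. pl (t - 1)) \<le> (\<Sum>t\<in>N. ql (t - 1)) + et * real (D_beta beta d T)"
  proof -
    have "(\<Sum>t\<in>N. pl (t - 1)) \<le> (\<Sum>t\<in>N. ql (t - 1) + et * card (Out (t - 1)))"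
    proof (rule sum_mono)
      fix t assume "t \<in> N"
      then have "Suc (t - 1) = t" using tN by blast
      then show "pl (t - 1) \<le> ql (t - 1) + et * card (Out (t - 1))"
        using drift_total[of "t - 1"] unfolding pl_def ql_def by simp
    qed
    also have "\<dots> = (\<Sum>t\<in>N. ql (t - 1)) + et * (\<Sum>t\<in>N. real (card (Out (t - 1))))"
      by (simp add: sum.distrib sum_distrib_left)
    also have "(\<Sum>t\<in>N. real (card (Out (t - 1)))) \<le> (\<Sum>t\<in>{1..T}. real (card (Out (t - 1))))"
      by (intro sum_mono2) (auto simp: N_def Np_def)
    also have "\<dots> = (\<Sum>n<T. real (card (Out n)))" by (rule shift_sum)
    also have "\<dots> \<le> real (D_beta beta d T)" using count_Out[of T] by (simp flip: of_nat_sum)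
    finally show ?thesis using et_pos by (simp add: mult_left_mono)
  qed
  have ew: "(\<Sum>t\<in>N. ql (t - 1)) \<le> ln (real K) / et + (\<Sum>t\<in>N. l t astar) + et / 2 * (\<Sum>t\<in>N. sq (t - 1))"
  proof -
    define F1 where "F1 h = (\<Sum>t\<in>N. \<Sum>a\<in>{1..K}. q (t - 1) h a * est t h a)" for h
    define F2 where "F2 h = (\<Sum>t\<in>N. \<Sum>a\<in>{1..K}. q (t - 1) h a * (est t h a)\<^sup>2)" for h
    have i1: "E T F1 \<le> E T (\<lambda>h. ln (real K) / et + Lfull T h astar + et / 2 * F2 h)"
      unfolding N_def F1_def F2_def by (rule E_mono) (rule pointwise_ew[OF astar])
    have i2: "E T (\<lambda>h. ln (real K) / et + Lfull T h astar + et / 2 * F2 h)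
       = ln (real K) / et + E T (\<lambda>h. Lfull T h astar) + et / 2 * E T F2"
      using E_add[of T "\<lambda>h. ln (real K) / et + Lfull T h astar" "\<lambda>h. et / 2 * F2 h"]
        E_add[of T "\<lambda>h. ln (real K) / et" "\<lambda>h. Lfull T h astar"]
        E_const[of T "ln (real K) / et"] E_cmult[of T "et / 2" F2] by simp
    have i3: "E T (\<lambda>h. Lfull T h astar) = (\<Sum>t\<in>N. l t astar)"
    proof -
      have "E T (\<lambda>h. Lfull T h astar) = (\<Sum>t\<in>N. E T (\<lambda>h. est t h astar))"
        unfolding Lfull_def N_def by (rule E_sum)
      also have "\<dots> = (\<Sum>t\<in>N. l t astar)"
      proof (rule sum.cong[OF refl])
        fix t assume "t \<in> N"
        then have e: "Suc (t - 1) = t" and le: "Suc (t - 1) \<le> T" using tN by blast+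
        show "E T (\<lambda>h. est t h astar) = l t astar" using R4[OF le astar] unfolding e .
      qed
      finally show ?thesis .
    qed
    have i4: "E T F2 = (\<Sum>t\<in>N. sq (t - 1))"
    proof -
      have "E T F2 = (\<Sum>t\<in>N. E T (\<lambda>h. \<Sum>a\<in>{1..K}. q (t - 1) h a * (est t h a)\<^sup>2))"
        unfolding F2_def by (rule E_sum)
      also have "\<dots> = (\<Sum>t\<in>N. sq (t - 1))"
      proof (rule sum.cong[OF refl])
        fix t assume "t \<in> N"
        then show "E T (\<lambda>h. \<Sum>a\<in>{1..K}. q (t - 1) h a * (est t h a)\<^sup>2) = sq (t - 1)"
        proof -
          have e: "Suc (t - 1) = t" and le: "Suc (t - 1) \<le> T" using tN[OF \<open>t \<in> N\<close>] by auto
          show ?thesis unfolding sq_def using R3[OF le] unfolding e .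
        qed
      qed
      finally show ?thesis .
    qed
    have i5: "E T F1 = (\<Sum>t\<in>N. ql (t - 1))"
    proof -
      have "E T F1 = (\<Sum>t\<in>N. E T (\<lambda>h. \<Sum>a\<in>{1..K}. q (t - 1) h a * est t h a))"
        unfolding F1_def by (rule E_sum)
      also have "\<dots> = (\<Sum>t\<in>N. ql (t - 1))"
      proof (rule sum.cong[OF refl])
        fix t assume "t \<in> N"
        then show "E T (\<lambda>h. \<Sum>a\<in>{1..K}. q (t - 1) h a * est t h a) = ql (t - 1)"
        proof -
          have e: "Suc (t - 1) = t" and le: "Suc (t - 1) \<le> T" using tN[OF \<open>t \<in> N\<close>] by auto
          show ?thesis unfolding ql_def using R2[OF le] unfolding e .
        qed
      qed
      finally show ?thesis .
    qed
    show ?thesis using i1 unfolding i2 i3 i4 i5 .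
  qed
  have sqb: "(\<Sum>t\<in>N. sq (t - 1)) \<le> real K * real T * exp 1"
  proof -
    have "sq n \<le> exp 1 * K" for n
    proof -
      have "sq n \<le> E n (\<lambda>h. exp 1 * K)" unfolding sq_def by (rule E_mono) (rule sq_pw)
      then show ?thesis by (simp add: E_const)
    qed
    then have "(\<Sum>t\<in>N. sq (t - 1)) \<le> (\<Sum>t\<in>N. exp 1 * K)" by (intro sum_mono) auto
    also have "\<dots> = card N * (exp 1 * K)" by simp
    also have "\<dots> \<le> T * (exp 1 * K)"
    proof -
      have "card N \<le> card {1..T}" using SN fS by (intro card_mono) auto
      then show ?thesis by (intro mult_right_mono) auto
    qed
    finally show ?thesis by (simp add: algebra_simps)
  qed
  have Nb: "(\<Sum>t\<in>N. pl (t - 1) - l t astar)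
      \<le> ln (real K) / et + et * (real K * real T * exp 1 / 2 + real (D_beta beta d T))"
  proof -
    have "(\<Sum>t\<in>N. pl (t - 1) - l t astar) = (\<Sum>t\<in>N. pl (t - 1)) - (\<Sum>t\<in>N. l t astar)"
      by (simp add: sum_subtractf)
    also have "\<dots> \<le> ln (real K) / et + et / 2 * (\<Sum>t\<in>N. sq (t - 1)) + et * real (D_beta beta d T)"
      using drift ew by simp
    also have "et / 2 * (\<Sum>t\<in>N. sq (t - 1)) \<le> et / 2 * (real K * real T * exp 1)"
      using sqb et_pos by (intro mult_left_mono) auto
    finally show ?thesis by (simp add: algebra_simps)
  qed
  have "skipper_dew_regret K eta beta l d T = (\<Sum>t\<in>S. pl (t - 1) - l t astar) + (\<Sum>t\<in>N. pl (t - 1) - l t astar)"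
    unfolding reg SN(1) by (rule sum.union_disjoint) (use fS SN(2) in auto)
  also have "\<dots> \<le> real (card S) + (ln (real K) / et + et * (real K * real T * exp 1 / 2 + real (D_beta beta d T)))"
    using Sb Nb by simp
  also have "et * (real K * real T * exp 1 / 2 + real (D_beta beta d T)) \<le> eta * (real K * real T * exp 1 / 2 + real (D_beta beta d T))"
    using et_le by (intro mult_right_mono) auto
  finally show ?thesis using ln_et unfolding S_def by simp
qed

end

theorem theorem3:
  fixes K T :: nat and eta beta :: real
    and l :: "nat \<Rightarrow> nat \<Rightarrow> real" and d :: "nat \<Rightarrow> nat"
  assumes "K \<ge> 2" and "T \<ge> 1" and "eta > 0" and "beta > 0"
    and "\<And>t a. a \<in> {1..K} \<Longrightarrow> 0 \<le> l t a \<and> l t a \<le> 1"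
  shows "skipper_dew_regret K eta beta l d T
         \<le> real (card (S_beta beta d T))
           + max (ln (real K) / eta) (4 * exp 1 * beta * ln (real K))
           + eta * (real K * real T * exp 1 / 2 + real (D_beta beta d T))"
proof -
  interpret dew K eta beta l d
    by (rule dew.intro) (use assms in auto)
  show ?thesis by (rule main)
qed

end
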